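(* Under the setting in the context, for every integer $v\ge1$, the number $V$ of false discoveries of the knockoffs procedure with parameter $v$ satisfies $\mathbb E[V]\le v$ (i.e. the procedure controls the per-family error rate at level $v$).
   Context: Setting: $p\ge1$; $W_1,\dots,W_p$ are real random variables, almost surely pairwise distinct; $\chi_1,\dots,\chi_p$ take values in $\{-1,0,1\}$; $\mathcal H_0\subseteq\{1,\dots,p\}$ is the set of true nulls, and conditional on $(W_1,\dots,W_p)$ and $(\chi_j)_{j\notin\mathcal H_0}$, the variables $(\chi_j)_{j\in\mathcal H_0}$ are jointly independent and uniform on $\{-1,+1\}$. Knockoffs procedure with parameter $v$: let $\rho$ be the permutation with $W_{\rho(1)}>\cdots>W_{\rho(p)}$; let $j^\star$ be the position of the $v$-th $-1$ in $\chi_{\rho(1)},\dots,\chi_{\rho(p)}$ ($j^\star=p$ if fewer than $v$ entries equal $-1$); reject $\rho(j)$ for all $j\le j^\star$ with $\chi_{\rho(j)}=+1$. $V=\#\{j\in\mathcal H_0: j\text{ rejected}\}$. *)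

theory Defs
  imports "HOL-Probability.Probability"
begin

text \<open>Variables are indexed by 1..p. The ordering rho lists the indices by
decreasing W (ties, which occur with probability zero, are broken arbitrarily
but deterministically by the stable sort).\<close>

definition knock_order :: "nat \<Rightarrow> (nat \<Rightarrow> real) \<Rightarrow> nat list" where
  "knock_order p w = rev (sort_key w [1..<Suc p])"

definition knock_negs :: "nat \<Rightarrow> (nat \<Rightarrow> real) \<Rightarrow> (nat \<Rightarrow> int) \<Rightarrow> nat \<Rightarrow> nat" where
  "knock_negs p w c t = card {k. k < t \<and> k < p \<and> c (knock_order p w ! k) = -1}"

text \<open>j-star: the (1-based) position of the v-th -1, or p if there are fewer than v.\<close>
definition knock_stop :: "nat \<Rightarrow> nat \<Rightarrow> (nat \<Rightarrow> real) \<Rightarrow> (nat \<Rightarrow> int) \<Rightarrow> nat" where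
  "knock_stop p v w c =
     (if v \<le> knock_negs p w c p then (LEAST t. knock_negs p w c t = v) else p)"

text \<open>Rejected indices: rho(j) for positions j \<le> j-star with sign +1
(0-based position k < j-star).\<close>
definition knock_rejections :: "nat \<Rightarrow> nat \<Rightarrow> (nat \<Rightarrow> real) \<Rightarrow> (nat \<Rightarrow> int) \<Rightarrow> nat set" where
  "knock_rejections p v w c =
     {knock_order p w ! k | k. k < knock_stop p v w c \<and> c (knock_order p w ! k) = 1}"

definition knock_V :: "nat \<Rightarrow> nat \<Rightarrow> nat set \<Rightarrow> (nat \<Rightarrow> real) \<Rightarrow> (nat \<Rightarrow> int) \<Rightarrow> nat" where
  "knock_V p v H0 w c = card (knock_rejections p v w c \<inter> H0)"

end

theory Submission
  imports Defs
begin

lemma ivt_nat: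
  fixes f :: "nat \<Rightarrow> nat"
  assumes "f 0 = 0" "\<And>t. f (Suc t) \<le> f t + 1" "v \<le> f n"
  shows "\<exists>t\<le>n. f t = v"
  using assms(3)
proof (induction n)
  case 0 then show ?case using assms(1) by auto
next
  case (Suc n)
  show ?case
  proof (cases "v \<le> f n")
    case True then show ?thesis using Suc.IH by (meson le_Suc_eq)
  next
    case False then have "f (Suc n) = v" using Suc.prems assms(2)[of n] by linarith
    then show ?thesis by blast
  qed
qed

lemma negs_0: "knock_negs p w c 0 = 0"
  by (simp add: knock_negs_def)

lemma negs_mono: "t \<le> t' \<Longrightarrow> knock_negs p w c t \<le> knock_negs p w c t'"
  unfolding knock_negs_def by (intro card_mono) auto

lemma negs_Suc: "knock_negs p w c (Suc t) \<le> knock_negs p w c t + 1"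
proof -
  have "{k. k < Suc t \<and> k < p \<and> c (knock_order p w ! k) = -1}
      \<subseteq> insert t {k. k < t \<and> k < p \<and> c (knock_order p w ! k) = -1}" by auto
  then have "knock_negs p w c (Suc t) \<le> card (insert t {k. k < t \<and> k < p \<and> c (knock_order p w ! k) = -1})"
    unfolding knock_negs_def by (intro card_mono) auto
  also have "\<dots> \<le> knock_negs p w c t + 1" unfolding knock_negs_def
    by (simp add: card_insert_if)
  finally show ?thesis .
qed

lemma stop_props:
  shows "knock_stop p v w c \<le> p"
    and "k < knock_stop p v w c \<Longrightarrow> knock_negs p w c k < v"
proof -
  let ?f = "knock_negs p w c"
  have "knock_stop p v w c \<le> p \<and> (k < knock_stop p v w c \<longrightarrow> ?f k < v)"
  proof (cases "v \<le> ?f p")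
    case True
    obtain t where t: "t \<le> p" "?f t = v" using ivt_nat[of ?f v p, OF negs_0 negs_Suc True] by blast
    have st: "knock_stop p v w c = (LEAST t. ?f t = v)" using True by (simp add: knock_stop_def)
    have le: "(LEAST t. ?f t = v) \<le> t" using t by (intro Least_le) 
    have "?f k < v" if "k < (LEAST t. ?f t = v)"
    proof (rule ccontr)
      assume "\<not> ?f k < v"
      then obtain t' where "t' \<le> k" "?f t' = v" using ivt_nat[of ?f v k, OF negs_0 negs_Suc] by (meson not_less)
      then have "(LEAST t. ?f t = v) \<le> t'" by (intro Least_le)
      then show False using that \<open>t' \<le> k\<close> by simp
    qed
    then show ?thesis using st le t by auto
  next
    case False
    then have "knock_stop p v w c = p" by (simp add: knock_stop_def)
    moreover have "k < p \<Longrightarrow> ?f k < v" using negs_mono[of k p p w c] False by linarith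
    ultimately show ?thesis by auto
  qed
  then show "knock_stop p v w c \<le> p" "k < knock_stop p v w c \<Longrightarrow> knock_negs p w c k < v" by auto
qed

lemma order_len: "length (knock_order p w) = p"
  by (simp add: knock_order_def)
lemma order_set: "set (knock_order p w) = {1..p}"
  by (auto simp: knock_order_def)
lemma order_distinct: "distinct (knock_order p w)"
  by (simp add: knock_order_def)
lemma order_sorted:
  assumes "k \<le> k'" "k' < p"
  shows "w (knock_order p w ! k') \<le> w (knock_order p w ! k)"
proof -
  let ?s = "sort_key w [1..<Suc p]"
  have len: "length ?s = p" by simp
  have sm: "sorted (map w ?s)" by (rule sorted_sort_key)
  have "knock_order p w ! k' = ?s ! (p - 1 - k')" "knock_order p w ! k = ?s ! (p - 1 - k)"
    using assms by (auto simp: knock_order_def rev_nth len)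
  moreover have "w (?s ! (p - 1 - k')) \<le> w (?s ! (p - 1 - k))"
    using sorted_nth_mono[OF sm, of "p - 1 - k'" "p - 1 - k"] assms len by auto
  ultimately show ?thesis by simp
qed

lemma det:
  assumes H0: "H0 \<subseteq> {1..p}"
  shows "knock_V p v H0 w c \<le> card {j\<in>H0. c j = 1 \<and> card {i\<in>H0. w i > w j \<and> c i = -1} < v}"
proof -
  let ?L = "knock_order p w"
  have fin: "finite H0" using H0 finite_subset by blast
  have "knock_rejections p v w c \<inter> H0 \<subseteq> {j\<in>H0. c j = 1 \<and> card {i\<in>H0. w i > w j \<and> c i = -1} < v}"
  proof
    fix j assume "j \<in> knock_rejections p v w c \<inter> H0"
    then obtain k where k: "j = ?L ! k" "k < knock_stop p v w c" "c j = 1" "j \<in> H0"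
      unfolding knock_rejections_def by auto
    have kp: "k < p" using k(2) stop_props(1)[of p v w c] by linarith
    have "card {i\<in>H0. w i > w j \<and> c i = -1} \<le> card {k'. k' < k \<and> k' < p \<and> c (?L ! k') = -1}"
    proof -
      let ?K = "{k'. k' < k \<and> k' < p \<and> c (?L ! k') = -1}"
      have C: "{i\<in>H0. w i > w j \<and> c i = -1} \<subseteq> (\<lambda>k'. ?L ! k') ` ?K"
      proof
        fix i assume "i \<in> {i\<in>H0. w i > w j \<and> c i = -1}"
        then have i: "i \<in> H0" "w i > w j" "c i = -1" by auto
        have iL: "i \<in> set ?L" using i(1) H0 order_set by auto
        then obtain y where yp: "y < p" and Ly: "?L ! y = i" using order_len[of p w] by (metis in_set_conv_nth)
        have "y < k"
        proof (rule ccontr)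
          assume "\<not> y < k"
          then have "w (?L ! y) \<le> w (?L ! k)" using order_sorted[of k y p w] yp by simp
          then show False using Ly k(1) i(2) by simp
        qed
        then show "i \<in> (\<lambda>k'. ?L ! k') ` ?K" using yp Ly i(3) by force
      qed
      have "card {i\<in>H0. w i > w j \<and> c i = -1} \<le> card ((\<lambda>k'. ?L ! k') ` ?K)"
        by (rule card_mono[OF _ C]) simp
      also have "\<dots> \<le> card ?K" by (rule card_image_le) simp
      finally show ?thesis .
    qed
    also have "\<dots> < v" using stop_props(2)[OF k(2)] by (simp add: knock_negs_def)
    finally show "j \<in> {j\<in>H0. c j = 1 \<and> card {i\<in>H0. w i > w j \<and> c i = -1} < v}" using k by auto
  qed
  then show ?thesis unfolding knock_V_def using fin by (intro card_mono) auto
qed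

definition cS :: "(nat \<Rightarrow> real) \<Rightarrow> nat set \<Rightarrow> nat \<Rightarrow> nat set \<Rightarrow> nat" where
  "cS w A v N = card {j\<in>A-N. card {i\<in>N. w i > w j} < v}"

lemma comb:
  fixes w :: "nat \<Rightarrow> real"
  shows "finite A \<Longrightarrow> inj_on w A \<Longrightarrow> (\<Sum>N\<in>Pow A. cS w A v N) \<le> v * 2 ^ card A"
proof (induction "card A" arbitrary: A v)
  case 0
  then have "A = {}" by simp
  then show ?case by (simp add: cS_def)
next
  case (Suc n)
  show ?case
  proof (cases v)
    case 0 then show ?thesis by (simp add: cS_def)
  next
    case (Suc u)
    have ne: "A \<noteq> {}" using Suc.hyps(2) by auto
    have "\<exists>t. t \<in> A \<and> (\<forall>i\<in>A. w i \<le> w t)"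
    proof -
      have "Max (w ` A) \<in> w ` A" using Max_in[of "w ` A"] Suc.prems ne by auto
      then obtain t where "t \<in> A" "w t = Max (w ` A)" by auto
      then show ?thesis using Suc.prems(1) by auto
    qed
    then obtain t where t: "t \<in> A" "\<And>i. i \<in> A \<Longrightarrow> w i \<le> w t" by blast
    define A' where "A' = A - {t}"
    have A: "A = insert t A'" "t \<notin> A'" using t A'_def by auto
    have fA': "finite A'" using Suc.prems A'_def by auto
    have cA': "card A' = n" using Suc.hyps(2) A fA' by simp
    have inj': "inj_on w A'" using Suc.prems(2) A'_def by (auto intro: inj_on_subset)
    have strict: "w i < w t" if "i \<in> A'" for i
      using t(2)[of i] that A Suc.prems(2) by (metis insertCI inj_on_eq_iff order_le_less)
    have sum_split: "(\<Sum>N\<in>Pow A. cS w A v N) = (\<Sum>N\<in>Pow A'. cS w A v N) + (\<Sum>N\<in>insert t ` Pow A'. cS w A v N)"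
      unfolding A(1) Pow_insert by (rule sum.union_disjoint) (use A fA' in auto)
    have img: "(\<Sum>N\<in>insert t ` Pow A'. cS w A v N) = (\<Sum>N\<in>Pow A'. cS w A v (insert t N))"
    proof (rule sum.reindex_cong[where l = "insert t"])
      show "inj_on (insert t) (Pow A')" using A(2) unfolding inj_on_def by (metis PowD insert_ident subset_iff)
    qed auto
    have e1: "cS w A v N = cS w A' v N + 1" if N: "N \<in> Pow A'" for N
    proof -
      have "{j\<in>A-N. card {i\<in>N. w i > w j} < v} = insert t {j\<in>A'-N. card {i\<in>N. w i > w j} < v}"
      proof -
        have em: "{i\<in>N. w i > w t} = {}" using N t(2) A by fastforce
        have "card {i\<in>N. w i > w t} < v" unfolding em using Suc by simp
        then show ?thesis using A N by auto
      qed
      moreover have "t \<notin> {j\<in>A'-N. card {i\<in>N. w i > w j} < v}" using A by auto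
      ultimately show ?thesis unfolding cS_def using fA' by simp
    qed
    have e2: "cS w A v (insert t N) = cS w A' u N" if N: "N \<in> Pow A'" for N
    proof -
      have "card {i\<in>insert t N. w i > w j} = card {i\<in>N. w i > w j} + 1" if j: "j \<in> A' - N" for j
      proof -
        have "{i\<in>insert t N. w i > w j} = insert t {i\<in>N. w i > w j}" using strict j by auto
        moreover have "finite N" using N fA' finite_subset by auto
        moreover have "t \<notin> {i\<in>N. w i > w j}" using A N by auto
        ultimately show ?thesis by simp
      qed
      then have "{j\<in>A-insert t N. card {i\<in>insert t N. w i > w j} < v} = {j\<in>A'-N. card {i\<in>N. w i > w j} < u}"
        using A Suc by auto
      then show ?thesis unfolding cS_def by simp
    qed
    have "(\<Sum>N\<in>Pow A. cS w A v N) = (\<Sum>N\<in>Pow A'. cS w A' v N) + 2 ^ n + (\<Sum>N\<in>Pow A'. cS w A' u N)"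
    proof -
      have "(\<Sum>N\<in>Pow A'. cS w A v N) = (\<Sum>N\<in>Pow A'. cS w A' v N + 1)"
        using e1 by (rule sum.cong[OF refl])
      also have "\<dots> = (\<Sum>N\<in>Pow A'. cS w A' v N) + 2 ^ n"
        by (simp only: sum.distrib) (simp add: card_Pow fA' cA')
      finally show ?thesis using sum_split img e2 by simp
    qed
    also have "\<dots> \<le> v * 2 ^ n + 2 ^ n + u * 2 ^ n"
      using Suc.hyps(1)[OF cA'[symmetric] fA' inj', of v] Suc.hyps(1)[OF cA'[symmetric] fA' inj', of u] unfolding cA' by (intro add_mono) auto
    also have "\<dots> = v * 2 ^ card A" unfolding Suc.hyps(2)[symmetric] \<open>v = Suc u\<close> by simp
    finally show ?thesis .
  qed
qed

lemma card_sum_real: "finite A \<Longrightarrow> real (card {i\<in>A. P i}) = (\<Sum>i\<in>A. if P i then 1 else 0)"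
  using sum.inter_filter[of A "\<lambda>_. 1::real" P] by simp

lemma cS_sum:
  assumes "finite A" "N \<subseteq> A"
  shows "real (cS a A v N) = (\<Sum>j\<in>A-N. if (\<Sum>i\<in>N. if a j < a i then 1 else 0::real) < real v then 1 else 0)"
proof -
  have fN: "finite N" using assms finite_subset by auto
  have "real (cS a A v N) = (\<Sum>j\<in>A-N. if card {i\<in>N. a i > a j} < v then 1 else 0)"
    unfolding cS_def using assms by (intro card_sum_real) auto
  also have "\<dots> = (\<Sum>j\<in>A-N. if (\<Sum>i\<in>N. if a j < a i then 1 else 0::real) < real v then 1 else 0)"
    by (intro sum.cong refl) (simp only: card_sum_real[OF fN, symmetric] of_nat_less_iff)
  finally show ?thesis .
qed

lemma cS_meas:
  assumes "finite A" "N \<subseteq> A" "A \<subseteq> I"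
  shows "(\<lambda>a::nat\<Rightarrow>real. real (cS a A v N)) \<in> borel_measurable (PiM I (\<lambda>_. borel))"
proof -
  have "(\<lambda>a::nat\<Rightarrow>real. (\<Sum>j\<in>A-N. if (\<Sum>i\<in>N. if a j < a i then 1 else 0::real) < real v then 1 else 0::real)) \<in> borel_measurable (PiM I (\<lambda>_. borel))"
  proof (rule borel_measurable_sum[of "A-N" "\<lambda>j (a::nat\<Rightarrow>real). if (\<Sum>i\<in>N. if a j < a i then 1 else 0::real) < real v then 1 else 0::real"])
    fix j assume j: "j \<in> A - N"
    have mj: "(\<lambda>a::nat\<Rightarrow>real. a j) \<in> borel_measurable (PiM I (\<lambda>_. borel :: real measure))" using j assms by (intro measurable_component_singleton) auto
    have "(\<lambda>a::nat\<Rightarrow>real. (\<Sum>i\<in>N. if a j < a i then 1 else 0::real)) \<in> borel_measurable (PiM I (\<lambda>_. borel))"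
    proof (rule borel_measurable_sum[of N "\<lambda>i (a::nat\<Rightarrow>real). if a j < a i then 1 else 0::real"])
      fix i assume i: "i \<in> N"
      have mi: "(\<lambda>a::nat\<Rightarrow>real. a i) \<in> borel_measurable (PiM I (\<lambda>_. borel :: real measure))" using i assms by (intro measurable_component_singleton) auto
      show "(\<lambda>a::nat\<Rightarrow>real. if a j < a i then 1 else 0::real) \<in> borel_measurable (PiM I (\<lambda>_. borel))"
      proof -
        have pr[measurable]: "Measurable.pred (PiM I (\<lambda>_. borel :: real measure)) (\<lambda>x. x j < x i)"
          using borel_measurable_less[OF mj mi] unfolding pred_def by simp
        show ?thesis by measurable
      qed
    qed
    note this[measurable]
    show "(\<lambda>a::nat\<Rightarrow>real. if (\<Sum>i\<in>N. if a j < a i then 1 else 0::real) < real v then 1 else 0::real) \<in> borel_measurable (PiM I (\<lambda>_. borel))"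
      by measurable
  qed
  then show ?thesis using cS_sum[OF assms(1,2)] by simp
qed

lemma simple_int:
  fixes h :: "'a \<Rightarrow> real"
  assumes "prob_space M" "h \<in> borel_measurable M" "\<And>x. x \<in> space M \<Longrightarrow> h x \<in> real ` {..K}" "E \<in> sets M"
  shows "(\<integral>x. h x * indicator E x \<partial>M) = (\<Sum>n\<le>K. real n * measure M {x\<in>space M. h x = real n \<and> x \<in> E})"
proof -
  interpret prob_space M by fact
  have S: "{x\<in>space M. h x = real n \<and> x \<in> E} \<in> sets M" for n
    using assms(2,4) by measurable
  have "(\<integral>x. h x * indicator E x \<partial>M) = (\<integral>x. (\<Sum>n\<le>K. real n * indicator {x\<in>space M. h x = real n \<and> x \<in> E} x) \<partial>M)"
  proof (intro Bochner_Integration.integral_cong refl)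
    fix x assume x: "x \<in> space M"
    then obtain k where k: "k \<le> K" "h x = real k" using assms(3) by force
    have "(\<Sum>n\<le>K. real n * indicator {x\<in>space M. h x = real n \<and> x \<in> E} x) = (\<Sum>n\<le>K. if n = k then real k * indicator E x else 0)"
      using x k by (intro sum.cong refl) (auto simp: indicator_def)
    also have "\<dots> = real k * indicator E x" using k by simp
    finally show "h x * indicator E x = (\<Sum>n\<le>K. real n * indicator {x\<in>space M. h x = real n \<and> x \<in> E} x)"
      using k by simp
  qed
  also have "\<dots> = (\<Sum>n\<le>K. (\<integral>x. real n * indicator {x\<in>space M. h x = real n \<and> x \<in> E} x \<partial>M))"
    by (intro Bochner_Integration.integral_sum integrable_mult_right integrable_real_indicator S) (simp add: less_top[symmetric])
  also have "\<dots> = (\<Sum>n\<le>K. real n * measure M {x\<in>space M. h x = real n \<and> x \<in> E})"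
    using S by (intro sum.cong refl) simp
  finally show ?thesis .
qed

theorem mainTheorem4:
  fixes M :: "'a measure" and p v :: nat and H0 :: "nat set"
    and W :: "nat \<Rightarrow> 'a \<Rightarrow> real" and chi :: "nat \<Rightarrow> 'a \<Rightarrow> int"
  assumes "prob_space M"
    and "p \<ge> 1" and "v \<ge> 1"
    and "H0 \<subseteq> {1..p}"
    and "\<And>j. j \<in> {1..p} \<Longrightarrow> W j \<in> borel_measurable M"
    and "\<And>j. j \<in> {1..p} \<Longrightarrow> chi j \<in> measurable M (count_space UNIV)"
    and "\<And>j x. j \<in> {1..p} \<Longrightarrow> x \<in> space M \<Longrightarrow> chi j x \<in> {-1, 0, 1}"
    and "AE x in M. \<forall>i\<in>{1..p}. \<forall>j\<in>{1..p}. i \<noteq> j \<longrightarrow> W i x \<noteq> W j x"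
    and "\<And>s B. (\<forall>j\<in>H0. s j \<in> {-1, 1}) \<Longrightarrow>
          B \<in> sets (PiM {1..p} (\<lambda>_. borel) \<Otimes>\<^sub>M PiM ({1..p} - H0) (\<lambda>_. count_space UNIV)) \<Longrightarrow>
          measure M {x \<in> space M.
              (restrict (\<lambda>j. W j x) {1..p}, restrict (\<lambda>j. chi j x) ({1..p} - H0)) \<in> B
              \<and> (\<forall>j\<in>H0. chi j x = s j)}
          = measure M {x \<in> space M.
              (restrict (\<lambda>j. W j x) {1..p}, restrict (\<lambda>j. chi j x) ({1..p} - H0)) \<in> B}
            / 2 ^ card H0"
  shows "(\<integral>x. real (knock_V p v H0 (\<lambda>j. W j x) (\<lambda>j. chi j x)) \<partial>M) \<le> real v"
proof -
  interpret P: prob_space M by (rule assms(1))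
  have H0sub: "H0 \<subseteq> {1..p}" by (rule assms(4))
  have finH0: "finite H0" using H0sub finite_subset by blast
  define rW where "rW x = restrict (\<lambda>j. W j x) {1..p}" for x
  define rC where "rC x = restrict (\<lambda>j. chi j x) ({1..p} - H0)" for x
  define PP where "PP = PiM {1..p} (\<lambda>_. borel :: real measure) \<Otimes>\<^sub>M PiM ({1..p} - H0) (\<lambda>_. count_space (UNIV :: int set))"
  define sN where "sN N j = (if j \<in> N then -1 else (1::int))" for N :: "nat set" and j
  define E where "E N = {x\<in>space M. \<forall>j\<in>H0. chi j x = sN N j}" for N
  define g where "g N x = real (cS (rW x) H0 v N)" for N x
  define m where "m = card H0"
  have rWi: "rW x i = W i x" if "i \<in> H0" for x i using that H0sub by (auto simp: rW_def)
  have mrW: "rW \<in> measurable M (PiM {1..p} (\<lambda>_. borel))"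
    unfolding rW_def by (intro measurable_restrict assms(5))
  have mrC: "rC \<in> measurable M (PiM ({1..p} - H0) (\<lambda>_. count_space UNIV))"
    unfolding rC_def by (intro measurable_restrict assms(6)) auto
  have mpair: "(\<lambda>x. (rW x, rC x)) \<in> measurable M PP"
    unfolding PP_def by (intro measurable_Pair mrW mrC)
  have gmeas: "g N \<in> borel_measurable M" if "N \<subseteq> H0" for N
    unfolding g_def[abs_def] by (rule measurable_compose[OF mrW cS_meas[OF finH0 that H0sub]])
  have gle: "cS a H0 v N \<le> m" for a N
    unfolding cS_def m_def using finH0 by (intro card_mono) auto
  have grange: "g N x \<in> real ` {..m}" for N x using gle[of "rW x" N] unfolding g_def by auto
  have gnn: "0 \<le> g N x" for N x unfolding g_def by simp
  have Emeas: "E N \<in> sets M" for N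
  proof -
    have "{x\<in>space M. chi j x = sN N j} \<in> sets M" if "j \<in> H0" for j
    proof -
      have "chi j -` {sN N j} \<inter> space M \<in> sets M"
        by (rule measurable_sets[OF assms(6)]) (use that H0sub in auto)
      moreover have "chi j -` {sN N j} \<inter> space M = {x\<in>space M. chi j x = sN N j}" by auto
      ultimately show ?thesis by simp
    qed
    then show ?thesis unfolding E_def by (intro sets.sets_Collect_finite_All finH0)
  qed
  have inPP: "(rW x, rC x) \<in> space PP" if "x \<in> space M" for x
    using measurable_space[OF mpair that] .
  have sNpm: "\<forall>j\<in>H0. sN N j \<in> {-1, 1}" for N by (simp add: sN_def)
  have indep: "measure M {x \<in> space M. (rW x, rC x) \<in> B \<and> (\<forall>j\<in>H0. chi j x = sN N j)}
      = measure M {x \<in> space M. (rW x, rC x) \<in> B} / 2 ^ m" if "B \<in> sets PP" for B N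
    using assms(9)[OF sNpm that[unfolded PP_def]] unfolding rW_def rC_def m_def by simp
  have key: "measure M {x\<in>space M. g N x = real n \<and> x \<in> E N} = measure M {x\<in>space M. g N x = real n} / 2 ^ m"
    if N: "N \<subseteq> H0" for N n
  proof -
    define f where "f z = real (cS (fst z) H0 v N)" for z :: "(nat \<Rightarrow> real) \<times> (nat \<Rightarrow> int)"
    have fm: "f \<in> borel_measurable PP"
      unfolding f_def[abs_def] PP_def by (rule measurable_compose[OF measurable_fst cS_meas[OF finH0 N H0sub]])
    define B where "B = f -` {real n} \<inter> space PP"
    have B: "B \<in> sets PP" unfolding B_def by (rule measurable_sets[OF fm]) simp
    have e1: "{x \<in> space M. (rW x, rC x) \<in> B \<and> (\<forall>j\<in>H0. chi j x = sN N j)} = {x\<in>space M. g N x = real n \<and> x \<in> E N}"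
      using inPP by (auto simp: B_def f_def g_def E_def)
    have e2: "{x \<in> space M. (rW x, rC x) \<in> B} = {x\<in>space M. g N x = real n}"
      using inPP by (auto simp: B_def f_def g_def)
    show ?thesis using indep[OF B, of N] e1 e2 by simp
  qed
  have int_eq: "(\<integral>x. g N x * indicator (E N) x \<partial>M) = (\<integral>x. g N x \<partial>M) / 2 ^ m" if N: "N \<subseteq> H0" for N
  proof -
    have "(\<integral>x. g N x * indicator (E N) x \<partial>M) = (\<Sum>n\<le>m. real n * measure M {x\<in>space M. g N x = real n \<and> x \<in> E N})"
      by (rule simple_int[OF assms(1) gmeas[OF N] grange Emeas])
    also have "\<dots> = (\<Sum>n\<le>m. real n * measure M {x\<in>space M. g N x = real n \<and> x \<in> space M}) / 2 ^ m"
    proof -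
      have "{x\<in>space M. g N x = real n \<and> x \<in> space M} = {x\<in>space M. g N x = real n}" for n by auto
      then show ?thesis using key[OF N] by (simp add: sum_divide_distrib)
    qed
    also have "(\<Sum>n\<le>m. real n * measure M {x\<in>space M. g N x = real n \<and> x \<in> space M}) = (\<integral>x. g N x * indicator (space M) x \<partial>M)"
      by (rule simple_int[OF assms(1) gmeas[OF N] grange sets.top, symmetric])
    also have "(\<integral>x. g N x * indicator (space M) x \<partial>M) = (\<integral>x. g N x \<partial>M)"
      by (intro Bochner_Integration.integral_cong refl) simp
    finally show ?thesis .
  qed
  have PE: "measure M (E N) = 1 / 2 ^ m" for N
  proof -
    have "measure M {x \<in> space M. (rW x, rC x) \<in> space PP \<and> (\<forall>j\<in>H0. chi j x = sN N j)}
      = measure M {x \<in> space M. (rW x, rC x) \<in> space PP} / 2 ^ m" by (rule indep) simp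
    moreover have "{x \<in> space M. (rW x, rC x) \<in> space PP \<and> (\<forall>j\<in>H0. chi j x = sN N j)} = E N"
      using inPP by (auto simp: E_def)
    moreover have "{x \<in> space M. (rW x, rC x) \<in> space PP} = space M" using inPP by auto
    ultimately show ?thesis using P.prob_space by simp
  qed
  have disj: "disjoint_family_on E (Pow H0)"
    unfolding disjoint_family_on_def
  proof (intro ballI impI)
    fix N N' assume N: "N \<in> Pow H0" "N' \<in> Pow H0" "N \<noteq> N'"
    then obtain j where j: "j \<in> H0" "(j \<in> N) \<noteq> (j \<in> N')" by blast
    then have "sN N j \<noteq> sN N' j" by (auto simp: sN_def)
    then show "E N \<inter> E N' = {}" using j by (auto simp: E_def)
  qed
  have PU: "measure M (\<Union>N\<in>Pow H0. E N) = 1"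
  proof -
    have "measure M (\<Union>N\<in>Pow H0. E N) = (\<Sum>N\<in>Pow H0. measure M (E N))"
      by (rule measure_finite_Union) (use finH0 disj Emeas in \<open>auto simp: P.emeasure_finite\<close>)
    also have "\<dots> = 2 ^ m * (1 / 2 ^ m)" using PE finH0 by (simp add: card_Pow m_def)
    finally show ?thesis by simp
  qed
  have AEU: "AE x in M. x \<in> (\<Union>N\<in>Pow H0. E N)" by (rule P.AE_prob_1[OF PU])
  have AEinj: "AE x in M. inj_on (rW x) H0"
    using assms(8) by eventually_elim (use H0sub rWi in \<open>auto simp: inj_on_def\<close>)
  have bound1: "AE x in M. real (knock_V p v H0 (\<lambda>j. W j x) (\<lambda>j. chi j x)) \<le> (\<Sum>N\<in>Pow H0. g N x * indicator (E N) x)"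
    using AEU
  proof eventually_elim
    case (elim x)
    then obtain N0 where N0: "N0 \<subseteq> H0" "x \<in> E N0" by auto
    have chiN: "chi j x = sN N0 j" if "j \<in> H0" for j using N0 that by (auto simp: E_def)
    have "{j\<in>H0. chi j x = 1 \<and> card {i\<in>H0. W i x > W j x \<and> chi i x = -1} < v} = {j\<in>H0-N0. card {i\<in>N0. rW x i > rW x j} < v}"
    proof -
      have "{i\<in>H0. W i x > W j x \<and> chi i x = -1} = {i\<in>N0. rW x i > rW x j}" if "j \<in> H0" for j
        using that N0(1) chiN rWi by (auto simp: sN_def split: if_splits)
      then show ?thesis using chiN by (auto simp: sN_def split: if_splits)
    qed
    then have "knock_V p v H0 (\<lambda>j. W j x) (\<lambda>j. chi j x) \<le> cS (rW x) H0 v N0"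
      using det[OF H0sub, of v "\<lambda>j. W j x" "\<lambda>j. chi j x"] unfolding cS_def by simp
    then have "real (knock_V p v H0 (\<lambda>j. W j x) (\<lambda>j. chi j x)) \<le> g N0 x * indicator (E N0) x"
      using N0 by (simp add: g_def)
    also have "\<dots> \<le> (\<Sum>N\<in>Pow H0. g N x * indicator (E N) x)"
      by (rule member_le_sum) (use N0 finH0 gnn in auto)
    finally show ?case .
  qed
  have bound2: "AE x in M. (\<Sum>N\<in>Pow H0. g N x / 2 ^ m) \<le> real v"
    using AEinj
  proof eventually_elim
    case (elim x)
    have "(\<Sum>N\<in>Pow H0. cS (rW x) H0 v N) \<le> v * 2 ^ m" unfolding m_def by (rule comb[OF finH0 elim])
    then have "(\<Sum>N\<in>Pow H0. g N x) \<le> real v * 2 ^ m" unfolding g_def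
      by (metis (mono_tags, lifting) of_nat_le_iff of_nat_mult of_nat_numeral of_nat_power of_nat_sum sum.cong)
    then show ?case by (simp add: sum_divide_distrib[symmetric] divide_le_eq)
  qed
  have intg1: "integrable M (\<lambda>x. g N x * indicator (E N) x)" if "N \<subseteq> H0" for N
  proof (rule P.integrable_const_bound[where B = "real m"])
    show "AE x in M. norm (g N x * indicator (E N) x) \<le> real m"
      using gle by (auto simp: g_def indicator_def)
    show "(\<lambda>x. g N x * indicator (E N) x) \<in> borel_measurable M"
      by (intro borel_measurable_times gmeas[OF that] borel_measurable_indicator Emeas)
  qed
  have intg2: "integrable M (\<lambda>x. g N x / 2 ^ m)" if "N \<subseteq> H0" for N
  proof (rule P.integrable_const_bound[where B = "real m"])
    show "AE x in M. norm (g N x / 2 ^ m) \<le> real m"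
    proof (rule AE_I2)
      fix x
      have "(1::real) \<le> 2 ^ m" by simp
      then have "g N x * 1 \<le> g N x * 2 ^ m" using gnn[of N x] by (intro mult_left_mono) auto
      then have "g N x / 2 ^ m \<le> g N x" by (simp add: divide_le_eq)
      then show "norm (g N x / 2 ^ m) \<le> real m" using gle[of "rW x" N] gnn[of N x] by (auto simp: g_def)
    qed
    show "(\<lambda>x. g N x / 2 ^ m) \<in> borel_measurable M"
      by (intro borel_measurable_divide gmeas[OF that] borel_measurable_const)
  qed
  show ?thesis
  proof (cases "integrable M (\<lambda>x. real (knock_V p v H0 (\<lambda>j. W j x) (\<lambda>j. chi j x)))")
    case False
    then show ?thesis by (simp add: not_integrable_integral_eq)
  next
    case True
    have "(\<integral>x. real (knock_V p v H0 (\<lambda>j. W j x) (\<lambda>j. chi j x)) \<partial>M) \<le> (\<integral>x. (\<Sum>N\<in>Pow H0. g N x * indicator (E N) x) \<partial>M)"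
      by (rule integral_mono_AE[OF True _ bound1]) (use intg1 in auto)
    also have "\<dots> = (\<Sum>N\<in>Pow H0. (\<integral>x. g N x * indicator (E N) x \<partial>M))"
      by (rule Bochner_Integration.integral_sum) (use intg1 in auto)
    also have "\<dots> = (\<Sum>N\<in>Pow H0. (\<integral>x. g N x / 2 ^ m \<partial>M))"
      by (intro sum.cong refl) (simp add: int_eq)
    also have "\<dots> = (\<integral>x. (\<Sum>N\<in>Pow H0. g N x / 2 ^ m) \<partial>M)"
      by (rule Bochner_Integration.integral_sum[symmetric]) (use intg2 in auto)
    also have "\<dots> \<le> (\<integral>x. real v \<partial>M)"
      by (rule integral_mono_AE[OF _ _ bound2]) (use intg2 in auto)
    also have "\<dots> = real v" using P.prob_space by simp
    finally show ?thesis .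
  qed
qed

end
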